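(* For all integers $n\geq 3$ and $k\geq 0$, $$nI_{n,k}=(k+1)I_{n-1,k}+(n-k)I_{n-1,k-1}+[(k+1)^2+n-2]I_{n-2,k}+[2k(n-k-1)-n+3]I_{n-2,k-1}+[(n-k)^2+n-2]I_{n-2,k-2},$$ where $I_{m,j}=0$ for $j<0$.
   Context: For a permutation $\pi=a_1a_2\cdots a_m$ of $[m]=\{1,\ldots,m\}$, a descent is an index $1\leq i\leq m-1$ with $a_i>a_{i+1}$, and ${\rm d}(\pi)$ is the number of descents. An involution of $[m]$ is a permutation $\pi$ with $\pi^2=\mathrm{id}$. $I_{m,j}$ denotes the number of involutions of $[m]$ with exactly $j$ descents (so $I_{m,j}=0$ for $j<0$ or $j>m-1$). *)

theory Defs
  imports "HOL-Combinatorics.Permutations"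
begin

definition des :: "nat \<Rightarrow> (nat \<Rightarrow> nat) \<Rightarrow> nat" where
  "des m p = card {i. 1 \<le> i \<and> i \<le> m - 1 \<and> p i > p (Suc i)}"

definition involutions :: "nat \<Rightarrow> (nat \<Rightarrow> nat) set" where
  "involutions m = {p. p permutes {1..m} \<and> p \<circ> p = id}"

definition Inv :: "nat \<Rightarrow> int \<Rightarrow> int" where
  "Inv m j = (if j < 0 then 0 else int (card {p \<in> involutions m. int (des m p) = j}))"

end

theory Submission
  imports Defs "HOL-Library.Multiset" "HOL-Library.Product_Lexorder"
begin



definition W :: "nat \<Rightarrow> nat \<Rightarrow> nat set \<Rightarrow> (nat \<Rightarrow> nat) set" where
"W n v D = {f. (\<forall>i. (i < 1 \<or> n < i) \<longrightarrow> f i = 0) \<and> (\<forall>i. 1 \<le> i \<longrightarrow> i \<le> n \<longrightarrow> f i < v)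
   \<and> (\<forall>i. 1 \<le> i \<longrightarrow> i < n \<longrightarrow> f i \<le> f (Suc i) \<and> (i \<in> D \<longrightarrow> f i < f (Suc i)))}"

lemma W_mono:
  assumes "f \<in> W n v D" "1 \<le> i" "i \<le> j" "j \<le> n"
  shows "f i \<le> f j"
  using assms(3,4)
proof (induction j rule: dec_induct)
  case base then show ?case by simp
next
  case (step j)
  then have "f j \<le> f (Suc j)" using assms(1,2) unfolding W_def by auto
  with step show ?case by simp
qed

lemma hockey: "(\<Sum>a<v. (a + c) choose n) + (c choose Suc n) = (v + c) choose Suc n"
  by (induction v) simp_all

lemma W0: "W 0 v D = {\<lambda>_. 0}"
  unfolding W_def by auto

lemma W_Suc:
  "W (Suc n) v D = (\<Union>a<v. (\<lambda>g. g(Suc n := a)) ` W n (if 1 \<le> n \<and> n \<in> D then a else Suc a) D)"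
  (is "?L = ?R")
proof
  show "?L \<subseteq> ?R"
  proof
    fix f assume f: "f \<in> ?L"
    define a where "a = f (Suc n)"
    have av: "a < v" using f unfolding W_def a_def by auto
    have "f(Suc n := 0) \<in> W n (if 1 \<le> n \<and> n \<in> D then a else Suc a) D"
    proof -
      have "f i < (if 1 \<le> n \<and> n \<in> D then a else Suc a)" if "1 \<le> i" "i \<le> n" for i
      proof -
        have "f i \<le> f n" using W_mono[OF f that(1,2)] by simp
        moreover have "f n \<le> a \<and> (1 \<le> n \<and> n \<in> D \<longrightarrow> f n < a)"
          using f that unfolding W_def a_def by auto
        ultimately show ?thesis by auto
      qed
      then show ?thesis using f unfolding W_def by auto
    qed
    moreover have "f = (f(Suc n := 0))(Suc n := a)" by (simp add: a_def)
    ultimately show "f \<in> ?R" using av by blast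
  qed
next
  show "?R \<subseteq> ?L"
  proof
    fix f assume "f \<in> ?R"
    then obtain a g where a: "a < v" and g: "g \<in> W n (if 1 \<le> n \<and> n \<in> D then a else Suc a) D"
      and fg: "f = g(Suc n := a)" by blast
    have gi: "g i < (if 1 \<le> n \<and> n \<in> D then a else Suc a)" if "1 \<le> i" "i \<le> n" for i
      using g that unfolding W_def by auto
    show "f \<in> ?L" unfolding W_def fg
    proof (intro CollectI conjI allI impI)
      fix i assume "i < 1 \<or> Suc n < i" then show "(g(Suc n := a)) i = 0" using g unfolding W_def by auto
    next
      fix i assume "1 \<le> i" "i \<le> Suc n" then show "(g(Suc n := a)) i < v"
        using gi[of i] a by (cases "i = Suc n") (auto split: if_splits)
    next
      fix i assume "1 \<le> i" "i < Suc n" then show "(g(Suc n := a)) i \<le> (g(Suc n := a)) (Suc i)"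
        using gi[of i] g unfolding W_def by (cases "i = n") (auto split: if_splits)
    next
      fix i assume "1 \<le> i" "i < Suc n" "i \<in> D" then show "(g(Suc n := a)) i < (g(Suc n := a)) (Suc i)"
        using gi[of i] g unfolding W_def by (cases "i = n") (auto split: if_splits)
    qed
  qed
qed

lemma card_W: "finite (W n v D) \<and> card (W n v D) = (v + n - 1 - card {i\<in>D. 1 \<le> i \<and> i < n}) choose n"
proof (induction n arbitrary: v)
  case 0 then show ?case by (simp add: W0)
next
  case (Suc n)
  define b where "b a = (if 1 \<le> n \<and> n \<in> D then a else Suc a)" for a
  define k' where "k' = card {i\<in>D. 1 \<le> i \<and> i < n}"
  define k where "k = card {i\<in>D. 1 \<le> i \<and> i < Suc n}"
  have k'le: "k' \<le> n - 1"
  proof -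
    have "k' \<le> card {1..<n}" unfolding k'_def by (rule card_mono) auto
    then show ?thesis by simp
  qed
  have kle: "k \<le> n"
  proof -
    have "k \<le> card {1..<Suc n}" unfolding k_def by (rule card_mono) auto
    then show ?thesis by simp
  qed
  have split: "{i\<in>D. 1 \<le> i \<and> i < Suc n} = {i\<in>D. 1 \<le> i \<and> i < n} \<union> {i\<in>D. 1 \<le> i \<and> i = n}"
    by auto
  have kk: "k = k' + (if 1 \<le> n \<and> n \<in> D then 1 else 0)"
  proof (cases "1 \<le> n \<and> n \<in> D")
    case True
    then have e: "{i\<in>D. 1 \<le> i \<and> i = n} = {n}" by auto
    have nn: "n \<notin> {i\<in>D. 1 \<le> i \<and> i < n}" by simp
    have fi: "finite {i\<in>D. 1 \<le> i \<and> i < n}" by (rule finite_subset[of _ "{..<n}"]) auto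
    have "{i\<in>D. 1 \<le> i \<and> i < n} \<union> {n} = insert n {i\<in>D. 1 \<le> i \<and> i < n}" by blast
    then show ?thesis using True card_insert_disjoint[OF fi nn] unfolding k_def k'_def split e by simp
  next
    case False
    then have e: "{i\<in>D. 1 \<le> i \<and> i = n} = {}" by auto
    show ?thesis using False unfolding k_def k'_def split e by simp
  qed
  have fin: "finite (W n (b a) D)" for a using Suc.IH by simp
  have inj: "inj_on (\<lambda>g. g(Suc n := a)) (W n (b a) D)" for a
  proof (rule inj_onI)
    fix g h assume "g \<in> W n (b a) D" "h \<in> W n (b a) D" "g(Suc n := a) = h(Suc n := a)"
    then have "g (Suc n) = 0" "h (Suc n) = 0" unfolding W_def by auto
    moreover have "g x = h x" if "x \<noteq> Suc n" for x
      using fun_cong[OF \<open>g(Suc n := a) = h(Suc n := a)\<close>, of x] that by simp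
    ultimately show "g = h" by (metis ext)
  qed
  have disj: "\<forall>a\<in>{..<v}. \<forall>a'\<in>{..<v}. a \<noteq> a' \<longrightarrow>
      (\<lambda>g. g(Suc n := a)) ` W n (b a) D \<inter> (\<lambda>g. g(Suc n := a')) ` W n (b a') D = {}"
  proof (intro ballI impI)
    fix a a' :: nat assume "a \<noteq> a'"
    show "(\<lambda>g. g(Suc n := a)) ` W n (b a) D \<inter> (\<lambda>g. g(Suc n := a')) ` W n (b a') D = {}"
    proof (rule ccontr)
      assume "\<not> ?thesis"
      then obtain g h where "g(Suc n := a) = h(Suc n := a')" by blast
      then have "(g(Suc n := a)) (Suc n) = (h(Suc n := a')) (Suc n)" by simp
      with \<open>a \<noteq> a'\<close> show False by simp
    qed
  qed
  have WS: "W (Suc n) v D = (\<Union>a<v. (\<lambda>g. g(Suc n := a)) ` W n (b a) D)"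
    unfolding b_def by (rule W_Suc)
  have "card (W (Suc n) v D) = (\<Sum>a<v. card ((\<lambda>g. g(Suc n := a)) ` W n (b a) D))"
    unfolding WS by (rule card_UN_disjoint) (use fin disj in auto)
  also have "\<dots> = (\<Sum>a<v. card (W n (b a) D))"
    by (rule sum.cong) (simp_all add: card_image[OF inj])
  also have "\<dots> = (\<Sum>a<v. (a + (n - k)) choose n)"
  proof (rule sum.cong)
    fix a assume "a \<in> {..<v}"
    have "card (W n (b a) D) = (b a + n - 1 - k') choose n" using Suc.IH unfolding k'_def by simp
    also have "b a + n - 1 - k' = a + (n - k)" unfolding b_def kk using k'le by auto
    finally show "card (W n (b a) D) = (a + (n - k)) choose n" .
  qed simp
  also have "\<dots> = (v + (n - k)) choose Suc n"
    using hockey[where v=v and c="n - k" and n=n] binomial_eq_0[of "n - k" "Suc n"] by simp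
  finally have "card (W (Suc n) v D) = (v + Suc n - 1 - k) choose Suc n" using kle by simp
  moreover have "finite (W (Suc n) v D)" unfolding WS using fin by blast
  ultimately show ?case unfolding k_def by simp
qed




definition valid :: "nat \<Rightarrow> nat \<Rightarrow> (nat \<Rightarrow> nat) \<Rightarrow> (nat \<Rightarrow> nat) \<Rightarrow> bool" where
"valid n m p f \<longleftrightarrow> p \<in> involutions n \<and> f \<in> W n m {i. p i > p (Suc i)}"

definition Sym :: "nat \<Rightarrow> nat \<Rightarrow> (nat \<times> nat) multiset set" where
"Sym n m = {M. set_mset M \<subseteq> {..<m} \<times> {..<m} \<and> size M = n \<and> image_mset prod.swap M = M}"

definition Phi :: "nat \<Rightarrow> (nat \<Rightarrow> nat) \<Rightarrow> (nat \<Rightarrow> nat) \<Rightarrow> (nat \<times> nat) multiset" where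
"Phi n p f = image_mset (\<lambda>i. (f i, f (p i))) (mset_set {1..n})"

definition rk :: "nat \<Rightarrow> (nat \<Rightarrow> 'a) \<Rightarrow> nat \<Rightarrow> nat" where
"rk n pr j = card {j'\<in>{1..n}. j' < j \<and> pr j' = pr j}"

lemma rk_lt:
  assumes "pr j1 = pr j2" "j1 < j2" "j1 \<in> {1..n}"
  shows "rk n pr j1 < rk n pr j2"
proof -
  have "insert j1 {j'\<in>{1..n}. j' < j1 \<and> pr j' = pr j1} \<subseteq> {j'\<in>{1..n}. j' < j2 \<and> pr j' = pr j2}"
    using assms by auto
  then have "card (insert j1 {j'\<in>{1..n}. j' < j1 \<and> pr j' = pr j1}) \<le> card {j'\<in>{1..n}. j' < j2 \<and> pr j' = pr j2}"
    by (rule card_mono[rotated]) simp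
  then show ?thesis unfolding rk_def by simp
qed

lemma rk_unique:
  assumes "pr j1 = pr j2" "rk n pr j1 = rk n pr j2" "j1 \<in> {1..n}" "j2 \<in> {1..n}"
  shows "j1 = j2"
proof (rule ccontr)
  assume "j1 \<noteq> j2"
  then consider "j1 < j2" | "j2 < j1" by linarith
  then show False
  proof cases
    case 1 then show False using rk_lt[of pr j1 j2 n] assms by simp
  next
    case 2 then show False using rk_lt[of pr j2 j1 n] assms by simp
  qed
qed

lemma inv_facts:
  assumes "p \<in> involutions n"
  shows "p permutes {1..n}" "\<And>i. p (p i) = i" "\<And>i. i \<in> {1..n} \<Longrightarrow> p i \<in> {1..n}"
    "\<And>i j. p i = p j \<Longrightarrow> i = j"
proof -
  have h: "p permutes {1..n} \<and> p \<circ> p = id" using assms unfolding involutions_def by (rule CollectD)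
  then show pp: "p permutes {1..n}" by (rule conjunct1)
  have "p \<circ> p = id" using h by (rule conjunct2)
  then have "(p \<circ> p) i = id i" for i by (rule arg_cong)
  then show pi: "p (p i) = i" for i by (simp only: comp_apply id_apply)
  show "i \<in> {1..n} \<Longrightarrow> p i \<in> {1..n}" for i using permutes_in_image[OF pp, of i] by (rule iffD2)
  show "p i = p j \<Longrightarrow> i = j" for i j using pi[of i] pi[of j] by metis
qed

lemma mono_fiber:
  assumes v: "valid n m p f" and ij: "1 \<le> i" "i < j" "j \<le> n" and eq: "f i = f j"
  shows "p i < p j"
proof -
  have p: "p \<in> involutions n" and f: "f \<in> W n m {i. p i > p (Suc i)}" using v unfolding valid_def by auto
  have step: "p k < p (Suc k)" if "1 \<le> k" "k < n" "f k = f (Suc k)" for k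
  proof -
    have "\<not> p k > p (Suc k)" using f that unfolding W_def by auto
    moreover have "p k \<noteq> p (Suc k)" using inv_facts(4)[OF p, of k "Suc k"] by auto
    ultimately show ?thesis by simp
  qed
  have fm: "f a \<le> f b" if "1 \<le> a" "a \<le> b" "b \<le> n" for a b using W_mono[OF f that] .
  have "Suc i \<le> j" using ij by simp
  then show ?thesis using ij(3) eq
  proof (induction j rule: dec_induct)
    case base then show ?case using step[of i] ij by simp
  next
    case (step j)
    have "f i \<le> f j" using fm[of i j] ij step by simp
    moreover have "f j \<le> f (Suc j)" using fm[of j "Suc j"] ij step by simp
    ultimately have e1: "f i = f j" "f j = f (Suc j)" using step by simp_all
    have "p i < p j" using step.IH e1 step by simp
    moreover have "p j < p (Suc j)" using step(1,2) ij e1 by (intro \<open>\<And>k. _ \<Longrightarrow> _ \<Longrightarrow> _ \<Longrightarrow> p k < p (Suc k)\<close>) simp_all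
    ultimately show ?case by simp
  qed
qed


lemma valid_facts:
  assumes "valid n m p f"
  shows "p \<in> involutions n" "f \<in> W n m {i. p i > p (Suc i)}"
    "\<And>i. i \<in> {1..n} \<Longrightarrow> f i < m" "\<And>i. i \<notin> {1..n} \<Longrightarrow> f i = 0"
    "\<And>a b. 1 \<le> a \<Longrightarrow> a \<le> b \<Longrightarrow> b \<le> n \<Longrightarrow> f a \<le> f b"
proof -
  show p: "p \<in> involutions n" and f: "f \<in> W n m {i. p i > p (Suc i)}" using assms unfolding valid_def by simp_all
  show "i \<in> {1..n} \<Longrightarrow> f i < m" for i using f unfolding W_def by simp
  show "i \<notin> {1..n} \<Longrightarrow> f i = 0" for i using f unfolding W_def by (cases "i < 1") auto
  show "1 \<le> a \<Longrightarrow> a \<le> b \<Longrightarrow> b \<le> n \<Longrightarrow> f a \<le> f b" for a b using W_mono[OF f] by blast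
qed

lemma Phi_Sym:
  assumes v: "valid n m p f"
  shows "Phi n p f \<in> Sym n m"
proof -
  note vf = valid_facts[OF v]
  note pf = inv_facts[OF vf(1)]
  define g where "g i = (f i, f (p i))" for i
  have set: "set_mset (Phi n p f) \<subseteq> {..<m} \<times> {..<m}"
  proof
    fix x assume "x \<in># Phi n p f"
    then obtain i where i: "i \<in> {1..n}" and x: "x = g i" unfolding Phi_def g_def by auto
    have "f i < m" using vf(3)[OF i] .
    moreover have "f (p i) < m" using vf(3)[OF pf(3)[OF i]] .
    ultimately show "x \<in> {..<m} \<times> {..<m}" unfolding x g_def by simp
  qed
  have size: "size (Phi n p f) = n" unfolding Phi_def by simp
  have "image_mset prod.swap (Phi n p f) = image_mset (prod.swap \<circ> g) (mset_set {1..n})"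
    unfolding Phi_def g_def by (simp add: image_mset.compositionality comp_def)
  also have "prod.swap \<circ> g = g \<circ> p" unfolding g_def comp_def using pf(2) by auto
  also have "image_mset (g \<circ> p) (mset_set {1..n}) = image_mset g (image_mset p (mset_set {1..n}))"
    by (simp add: image_mset.compositionality)
  also have "image_mset p (mset_set {1..n}) = mset_set (p ` {1..n})"
    by (rule image_mset_mset_set) (simp add: inj_on_def pf(4))
  also have "p ` {1..n} = {1..n}" using permutes_image[OF pf(1)] .
  finally have "image_mset prod.swap (Phi n p f) = Phi n p f" unfolding Phi_def g_def by simp
  then show ?thesis using set size unfolding Sym_def by simp
qed

lemma L_sorted:
  assumes v: "valid n m p f"
  shows "sorted (map (\<lambda>i. (f i, f (p i))) [1..<Suc n])"
proof -
  note vf = valid_facts[OF v]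
  note pf = inv_facts[OF vf(1)]
  have "(f a, f (p a)) \<le> (f b, f (p b))" if "1 \<le> a" "a \<le> b" "b \<le> n" for a b
  proof (cases "f a < f b")
    case True then show ?thesis by simp
  next
    case False
    then have eq: "f a = f b" using vf(5)[OF that] by simp
    show ?thesis
    proof (cases "a = b")
      case True then show ?thesis by simp
    next
      case False
      then have "p a < p b" using mono_fiber[OF v, of a b] that eq by simp
      moreover have "p a \<in> {1..n}" "p b \<in> {1..n}" using pf(3) that by simp_all
      ultimately have "f (p a) \<le> f (p b)" using vf(5) by simp
      then show ?thesis using eq by simp
    qed
  qed
  then show ?thesis unfolding sorted_iff_nth_mono by (simp add: nth_append)
qed

lemma L_mset: "mset (map (\<lambda>i. (f i, f (p i))) [1..<Suc n]) = Phi n p f"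
  by (simp only: Phi_def mset_map mset_upt atLeastLessThanSuc_atLeastAtMost)


lemma rank_pres:
  assumes v: "valid n m p f" and i: "i \<in> {1..n}"
  shows "rk n (\<lambda>j. (f j, f (p j))) (p i) = rk n (\<lambda>j. (f j, f (p j))) i"
proof -
  note vf = valid_facts[OF v]
  note pf = inv_facts[OF vf(1)]
  define pr where "pr j = (f j, f (p j))" for j
  define R where "R = {j\<in>{1..n}. j < i \<and> pr j = pr i}"
  define Lf where "Lf = {j\<in>{1..n}. j < p i \<and> pr j = pr (p i)}"
  have prp: "pr (p j) = prod.swap (pr j)" for j unfolding pr_def using pf(2) by simp
  have "p ` R \<subseteq> Lf"
  proof
    fix x assume "x \<in> p ` R"
    then obtain j where j: "j \<in> R" and x: "x = p j" by blast
    have j1: "j \<in> {1..n}" "j < i" "f j = f i" "f (p j) = f (p i)" using j unfolding R_def pr_def by auto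
    have "p j < p i" using mono_fiber[OF v, of j i] j1 i by simp
    moreover have "pr (p j) = pr (p i)" unfolding pr_def using j1 pf(2)[of j] pf(2)[of i] by simp
    ultimately show "x \<in> Lf" unfolding Lf_def x using pf(3)[OF j1(1)] by simp
  qed
  moreover have "Lf \<subseteq> p ` R"
  proof
    fix j' assume "j' \<in> Lf"
    then have j': "j' \<in> {1..n}" "j' < p i" "pr j' = pr (p i)" unfolding Lf_def by auto
    define j where "j = p j'"
    have jj: "p j = j'" unfolding j_def using pf(2) by simp
    have jn: "j \<in> {1..n}" unfolding j_def using pf(3)[OF j'(1)] .
    have "pr j = prod.swap (pr j')" unfolding j_def by (rule prp)
    also have "\<dots> = prod.swap (pr (p i))" using j'(3) by simp
    also have "\<dots> = pr i" unfolding prp by simp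
    finally have prj: "pr j = pr i" .
    have "j < i"
    proof (rule ccontr)
      assume "\<not> j < i"
      then consider "j = i" | "i < j" by linarith
      then show False
      proof cases
        case 1 then show False using j'(2) jj by simp
      next
        case 2
        have "f i = f j" using prj unfolding pr_def by simp
        then have "p i < p j" using mono_fiber[OF v, of i j] 2 i jn by simp
        then show False using j'(2) jj by simp
      qed
    qed
    then have "j \<in> R" unfolding R_def using jn prj by simp
    then show "j' \<in> p ` R" using jj by blast
  qed
  ultimately have img: "p ` R = Lf" by blast
  have "inj_on p R" by (simp add: inj_on_def pf(4))
  then have "card Lf = card R" using card_image img by metis
  then show ?thesis unfolding rk_def Lf_def R_def pr_def .
qed

lemma rk_cong:
  assumes "\<And>j. j \<in> {1..n} \<Longrightarrow> pr j = pr' j" "x \<in> {1..n}"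
  shows "rk n pr x = rk n pr' x"
  unfolding rk_def using assms by (metis (mono_tags, lifting))

lemma Phi_inj:
  assumes v: "valid n m p f" and v': "valid n m p' f'" and eq: "Phi n p f = Phi n p' f'"
  shows "p = p' \<and> f = f'"
proof -
  note vf = valid_facts[OF v]
  note pf = inv_facts[OF vf(1)]
  note vf' = valid_facts[OF v']
  note pf' = inv_facts[OF vf'(1)]
  define pr where "pr j = (f j, f (p j))" for j
  define pr' where "pr' j = (f' j, f' (p' j))" for j
  define L where "L = map pr [1..<Suc n]"
  define L' where "L' = map pr' [1..<Suc n]"
  have sL: "sorted L" and sL': "sorted L'" using L_sorted[OF v] L_sorted[OF v'] unfolding L_def L'_def pr_def pr'_def by simp_all
  have "mset L = mset L'" using L_mset[of f p n] L_mset[of f' p' n] eq unfolding L_def L'_def pr_def pr'_def by simp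
  then have "sort L' = L" using properties_for_sort[of L L'] sL by simp
  moreover have "sort L' = L'" using sL' by (simp add: sorted_sort_id)
  ultimately have LL: "L = L'" by simp
  have prr: "pr i = pr' i" if "i \<in> {1..n}" for i
  proof -
    have "L ! (i - 1) = L' ! (i - 1)" using LL by simp
    moreover have "L ! (i - 1) = pr i" "L' ! (i - 1) = pr' i" unfolding L_def L'_def using that by (auto simp del: upt_Suc)
    ultimately show ?thesis by simp
  qed
  have ff: "f = f'"
  proof
    fix i show "f i = f' i"
    proof (cases "i \<in> {1..n}")
      case True then show ?thesis using prr[OF True] unfolding pr_def pr'_def by simp
    next
      case False then show ?thesis using vf(4) vf'(4) by simp
    qed
  qed
  have "p i = p' i" for i
  proof (cases "i \<in> {1..n}")
    case False then show ?thesis using permutes_not_in[OF pf(1)] permutes_not_in[OF pf'(1)] by simp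
  next
    case True
    have r1: "rk n pr (p i) = rk n pr i" using rank_pres[OF v True] unfolding pr_def .
    have r2: "rk n pr' (p' i) = rk n pr' i" using rank_pres[OF v' True] unfolding pr'_def .
    have in1: "p i \<in> {1..n}" "p' i \<in> {1..n}" using pf(3) pf'(3) True by simp_all
    have r3: "rk n pr (p' i) = rk n pr i"
      using r2 rk_cong[of n pr pr', OF prr] in1 True by simp
    have "pr (p' i) = pr' (p' i)" using prr in1 by simp
    also have "\<dots> = prod.swap (pr' i)" unfolding pr'_def using pf'(2) by simp
    also have "\<dots> = prod.swap (pr i)" using prr True by simp
    also have "\<dots> = pr (p i)" unfolding pr_def using pf(2) by simp
    finally have "pr (p' i) = pr (p i)" .
    then show ?thesis using rk_unique[of pr "p i" "p' i" n] r1 r3 in1 by simp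
  qed
  then show ?thesis using ff by auto
qed


lemma count_swap: "count (image_mset prod.swap M) (prod.swap x) = count M x"
proof (induction M)
  case (add y M)
  have "(prod.swap y = prod.swap x) = (y = x)" by (metis swap_swap)
  then show ?case using add by simp
qed simp

lemma Phi_surj:
  assumes M: "M \<in> Sym n m"
  shows "\<exists>p f. valid n m p f \<and> Phi n p f = M"
proof -
  have Mset: "set_mset M \<subseteq> {..<m} \<times> {..<m}" and Msize: "size M = n"
    and Msym: "image_mset prod.swap M = M" using M unfolding Sym_def by auto
  define L where "L = sorted_list_of_multiset M"
  have mL: "mset L = M" unfolding L_def by simp
  have lenL: "length L = n" using Msize mL by (metis size_mset)
  have sL: "sorted L" unfolding L_def by simp
  have setL: "set L \<subseteq> {..<m} \<times> {..<m}" using Mset mL by (metis set_mset_mset)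
  define pr where "pr i = L ! (i - 1)" for i
  define S where "S x = {j\<in>{1..n}. pr j = x}" for x
  have finS: "finite (S x)" for x unfolding S_def by simp
  have cntS: "card (S x) = count M x" for x
  proof -
    have "count M x = length (filter ((=) x) L)" using mL count_mset count_list_eq_length_filter by metis
    also have "\<dots> = card {i. i < n \<and> x = L ! i}" unfolding length_filter_conv_card lenL ..
    also have "\<dots> = card (Suc ` {i. i < n \<and> x = L ! i})" by (simp add: card_image)
    also have "Suc ` {i. i < n \<and> x = L ! i} = S x"
    proof
      show "Suc ` {i. i < n \<and> x = L ! i} \<subseteq> S x" unfolding S_def pr_def by auto
      show "S x \<subseteq> Suc ` {i. i < n \<and> x = L ! i}"
      proof
        fix j assume "j \<in> S x"
        then have j: "1 \<le> j" "j \<le> n" "L ! (j - 1) = x" unfolding S_def pr_def by auto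
        then have "j = Suc (j - 1)" "j - 1 < n" by simp_all
        then show "j \<in> Suc ` {i. i < n \<and> x = L ! i}" using j(3) by blast
      qed
    qed
    finally show ?thesis by simp
  qed
  have rk_lt_card: "rk n pr j < card (S (pr j))" if j: "j \<in> {1..n}" for j
  proof -
    have "{j'\<in>{1..n}. j' < j \<and> pr j' = pr j} \<subset> S (pr j)" unfolding S_def using j by auto
    then show ?thesis unfolding rk_def by (rule psubset_card_mono[OF finS])
  qed
  have rk_onto: "\<exists>j\<in>S x. rk n pr j = r" if r: "r < card (S x)" for x r
  proof -
    have sub: "rk n pr ` S x \<subseteq> {..<card (S x)}"
    proof
      fix y assume "y \<in> rk n pr ` S x"
      then obtain j where j: "j \<in> S x" "y = rk n pr j" by blast
      then have "pr j = x" "j \<in> {1..n}" unfolding S_def by auto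
      then show "y \<in> {..<card (S x)}" using rk_lt_card[of j] j by simp
    qed
    have "inj_on (rk n pr) (S x)"
    proof (rule inj_onI)
      fix a b assume "a \<in> S x" "b \<in> S x" "rk n pr a = rk n pr b"
      then show "a = b" using rk_unique[of pr a b n] unfolding S_def by simp
    qed
    then have "card (rk n pr ` S x) = card (S x)" by (rule card_image)
    then have "rk n pr ` S x = {..<card (S x)}" using card_seteq[OF _ sub] by simp
    then show ?thesis using r by (metis imageE lessThan_iff)
  qed
  have cnt_sym: "count M (prod.swap x) = count M x" for x
    using count_swap[of M x] Msym by simp
  have ex1: "\<exists>!j. j \<in> {1..n} \<and> pr j = prod.swap (pr i) \<and> rk n pr j = rk n pr i" if i: "i \<in> {1..n}" for i
  proof -
    have "rk n pr i < card (S (prod.swap (pr i)))" using rk_lt_card[OF i] cntS cnt_sym by simp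
    then obtain j where "j \<in> S (prod.swap (pr i))" "rk n pr j = rk n pr i" using rk_onto by blast
    then have "j \<in> {1..n} \<and> pr j = prod.swap (pr i) \<and> rk n pr j = rk n pr i" unfolding S_def by simp
    moreover have "j' = j" if "j' \<in> {1..n} \<and> pr j' = prod.swap (pr i) \<and> rk n pr j' = rk n pr i" for j'
      using rk_unique[of pr j' j n] that calculation by simp
    ultimately show ?thesis by blast
  qed
  define p where "p i = (if i \<in> {1..n} then (THE j. j \<in> {1..n} \<and> pr j = prod.swap (pr i) \<and> rk n pr j = rk n pr i) else i)" for i
  have pP: "p i \<in> {1..n} \<and> pr (p i) = prod.swap (pr i) \<and> rk n pr (p i) = rk n pr i" if i: "i \<in> {1..n}" for i
    unfolding p_def using i theI'[OF ex1[OF i]] by simp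
  have ppi: "p (p i) = i" for i
  proof (cases "i \<in> {1..n}")
    case False
    then have "p i = i" unfolding p_def by auto
    then show ?thesis by simp
  next
    case True
    have h: "p i \<in> {1..n}" "pr (p i) = prod.swap (pr i)" "rk n pr (p i) = rk n pr i" using pP[OF True] by auto
    have "p (p i) \<in> {1..n}" "pr (p (p i)) = pr i" "rk n pr (p (p i)) = rk n pr i"
      using pP[OF h(1)] h by auto
    then show ?thesis using rk_unique[of pr "p (p i)" i n] True by simp
  qed
  have perm: "p permutes {1..n}"
  proof (rule bij_imp_permutes)
    show "bij_betw p {1..n} {1..n}"
      by (rule bij_betw_byWitness[where f'=p]) (use ppi pP in auto)
    show "x \<notin> {1..n} \<Longrightarrow> p x = x" for x unfolding p_def by auto
  qed
  have pinv: "p \<in> involutions n" unfolding involutions_def using perm ppi by (auto simp: fun_eq_iff)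
  define f where "f i = (if i \<in> {1..n} then fst (pr i) else 0)" for i
  have prin: "pr i \<in> {..<m} \<times> {..<m}" if "i \<in> {1..n}" for i
  proof -
    have "i - 1 < length L" using that lenL by auto
    then have "L ! (i - 1) \<in> set L" by (rule nth_mem)
    then show ?thesis using setL unfolding pr_def by blast
  qed
  have prmono: "pr a \<le> pr b" if "1 \<le> a" "a \<le> b" "b \<le> n" for a b
    unfolding pr_def using sorted_nth_mono[OF sL, of "a - 1" "b - 1"] that lenL by simp
  have fpr: "(f i, f (p i)) = pr i" if "i \<in> {1..n}" for i
    using pP[OF that] that unfolding f_def by (cases "pr i") simp
  have fW: "f \<in> W n m {i. p i > p (Suc i)}"
    unfolding W_def
  proof (intro CollectI conjI allI impI)
    fix i assume "i < 1 \<or> n < i" then show "f i = 0" unfolding f_def by auto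
  next
    fix i assume "1 \<le> i" "i \<le> n" then show "f i < m" unfolding f_def using prin[of i] by auto
  next
    fix i assume i: "1 \<le> i" "i < n"
    then show "f i \<le> f (Suc i)" unfolding f_def using prmono[of i "Suc i"] by (auto simp: less_eq_prod_def)
  next
    fix i assume i: "1 \<le> i" "i < n" and d: "i \<in> {i. p (Suc i) < p i}"
    have le: "pr i \<le> pr (Suc i)" using prmono[of i "Suc i"] i by simp
    have in1: "i \<in> {1..n}" "Suc i \<in> {1..n}" using i by auto
    show "f i < f (Suc i)"
    proof (rule ccontr)
      assume "\<not> f i < f (Suc i)"
      then have feq: "fst (pr i) = fst (pr (Suc i))" using le in1 unfolding f_def by (auto simp: less_eq_prod_def)
      have pi1: "p i \<in> {1..n}" "pr (p i) = prod.swap (pr i)" "rk n pr (p i) = rk n pr i" using pP[OF in1(1)] by auto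
      have pi2: "p (Suc i) \<in> {1..n}" "pr (p (Suc i)) = prod.swap (pr (Suc i))" "rk n pr (p (Suc i)) = rk n pr (Suc i)" using pP[OF in1(2)] by auto
      have pl: "p (Suc i) < p i" using d by simp
      show False
      proof (cases "pr i = pr (Suc i)")
        case True
        have "rk n pr i < rk n pr (Suc i)" using rk_lt[of pr i "Suc i" n] True in1 by simp
        moreover have "rk n pr (p (Suc i)) < rk n pr (p i)"
          using rk_lt[of pr "p (Suc i)" "p i" n] pi1 pi2 True pl by simp
        ultimately show False using pi1 pi2 by simp
      next
        case False
        then have "snd (pr i) \<noteq> snd (pr (Suc i))" using feq by (metis prod.expand)
        then have "snd (pr i) < snd (pr (Suc i))" using le feq by (auto simp: less_eq_prod_def)
        then have "pr (p i) < pr (p (Suc i))" using pi1 pi2 feq by (auto simp: less_prod_def)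
        moreover have "pr (p (Suc i)) \<le> pr (p i)" using prmono[of "p (Suc i)" "p i"] pi1 pi2 pl by simp
        ultimately show False by simp
      qed
    qed
  qed
  have v: "valid n m p f" unfolding valid_def using pinv fW by simp
  have "Phi n p f = image_mset pr (mset_set {1..n})"
    unfolding Phi_def by (rule image_mset_cong) (use fpr in simp)
  also have "\<dots> = mset (map pr [1..<Suc n])" by (simp only: mset_map mset_upt atLeastLessThanSuc_atLeastAtMost)
  also have "map pr [1..<Suc n] = L"
    by (rule nth_equalityI) (simp_all add: lenL pr_def del: upt_Suc)
  finally show ?thesis using v mL by blast
qed




lemma finite_inv: "finite (involutions n)"
  by (rule finite_subset[OF _ finite_permutations[of "{1..n}"]]) (auto simp: involutions_def)

lemma des_eq: "des n p = card {i\<in>{i. p i > p (Suc i)}. 1 \<le> i \<and> i < n}"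
proof -
  have "{i. 1 \<le> i \<and> i \<le> n - 1 \<and> p i > p (Suc i)} = {i\<in>{i. p i > p (Suc i)}. 1 \<le> i \<and> i < n}" by auto
  then show ?thesis unfolding des_def by simp
qed

lemma card_Sym: "finite (Sym n m) \<and> card (Sym n m) = (\<Sum>p\<in>involutions n. (m + n - 1 - des n p) choose n)"
proof -
  define X where "X = (SIGMA p:involutions n. W n m {i. p i > p (Suc i)})"
  have finX: "finite X" unfolding X_def using finite_inv card_W by blast
  have bij: "bij_betw (\<lambda>(p, f). Phi n p f) X (Sym n m)"
  proof (rule bij_betwI')
    fix a b assume "a \<in> X" "b \<in> X"
    then show "((\<lambda>(p, f). Phi n p f) a = (\<lambda>(p, f). Phi n p f) b) = (a = b)"
      unfolding X_def using Phi_inj[of n m] by (auto simp: valid_def)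
  next
    fix a assume "a \<in> X"
    then show "(\<lambda>(p, f). Phi n p f) a \<in> Sym n m" unfolding X_def using Phi_Sym[of n m] by (auto simp: valid_def)
  next
    fix M assume "M \<in> Sym n m"
    then obtain p f where "valid n m p f" "Phi n p f = M" using Phi_surj by blast
    then show "\<exists>a\<in>X. M = (\<lambda>(p, f). Phi n p f) a" unfolding X_def valid_def by auto
  qed
  have "card (Sym n m) = card X" using bij_betw_same_card[OF bij] by simp
  also have "\<dots> = (\<Sum>p\<in>involutions n. card (W n m {i. p i > p (Suc i)}))"
    unfolding X_def using finite_inv card_W by simp
  also have "\<dots> = (\<Sum>p\<in>involutions n. (m + n - 1 - des n p) choose n)"
    using card_W des_eq by simp
  finally show ?thesis using bij_betw_finite[OF bij] finX by simp
qed

definition Dx :: "nat \<times> nat \<Rightarrow> (nat \<times> nat) multiset" where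
"Dx x = (if fst x = snd x then {#x#} else {#x, prod.swap x#})"

definition Cx :: "nat \<Rightarrow> nat \<times> nat \<Rightarrow> nat \<Rightarrow> nat" where
"Cx m x n = (\<Sum>M\<in>Sym n m. count M x)"

lemma swap_Dx: "image_mset prod.swap (Dx x) = Dx x"
proof (cases x)
  case (Pair a b) then show ?thesis unfolding Dx_def by (cases "a = b") (simp_all add: add_mset_commute)
qed

lemma count_Dx: "count (Dx x) x = 1"
proof (cases x)
  case (Pair a b) then show ?thesis unfolding Dx_def by (cases "a = b") simp_all
qed

lemma Dx_sub:
  assumes "M \<in> Sym n m" "x \<in># M"
  shows "Dx x \<subseteq># M"
proof (cases "fst x = snd x")
  case True then show ?thesis unfolding Dx_def using assms by simp
next
  case False
  have sym: "image_mset prod.swap M = M" using assms unfolding Sym_def by simp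
  have "count M (prod.swap x) = count M x" using count_swap[of M x] sym by simp
  then have c: "count M (prod.swap x) \<ge> 1" "count M x \<ge> 1" using assms(2) by (simp_all add: Suc_le_eq)
  have ne: "prod.swap x \<noteq> x" using False by (cases x) auto
  have "prod.swap x \<in># M - {#x#}" using c ne by (simp add: in_diff_count)
  then have "{#prod.swap x#} \<subseteq># M - {#x#}" by simp
  then have "add_mset x {#prod.swap x#} \<subseteq># M" using assms(2) by (simp add: insert_subset_eq_iff)
  then show ?thesis unfolding Dx_def using False by simp
qed

lemma size_Dx: "size (Dx x) = (if fst x = snd x then 1 else 2)"
  unfolding Dx_def by simp

lemma set_Dx: "x \<in> {..<m} \<times> {..<m} \<Longrightarrow> set_mset (Dx x) \<subseteq> {..<m} \<times> {..<m}"
proof (cases x)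
  case (Pair a b) then show "x \<in> {..<m} \<times> {..<m} \<Longrightarrow> ?thesis" unfolding Dx_def by simp
qed

lemma Cx_rec:
  assumes x: "x \<in> {..<m} \<times> {..<m}" and nw: "size (Dx x) \<le> n"
  shows "Cx m x n = Cx m x (n - size (Dx x)) + card (Sym (n - size (Dx x)) m)"
proof -
  define w where "w = size (Dx x)"
  define A where "A = {M\<in>Sym n m. x \<in># M}"
  have fin: "finite (Sym k m)" for k using card_Sym by blast
  have "Cx m x n = (\<Sum>M\<in>A. count M x)"
    unfolding Cx_def A_def by (rule sum.mono_neutral_right) (use fin in auto)
  also have "\<dots> = (\<Sum>N\<in>Sym (n - w) m. count (N + Dx x) x)"
  proof (rule sum.reindex_bij_betw[symmetric])
    show "bij_betw (\<lambda>N. N + Dx x) (Sym (n - w) m) A"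
    proof (rule bij_betwI')
      fix N N' show "(N + Dx x = N' + Dx x) = (N = N')" by simp
    next
      fix N assume N: "N \<in> Sym (n - w) m"
      have "set_mset (N + Dx x) \<subseteq> {..<m} \<times> {..<m}" using N set_Dx[OF x] unfolding Sym_def by auto
      moreover have "size (N + Dx x) = n" using N nw unfolding Sym_def w_def by simp
      moreover have "image_mset prod.swap (N + Dx x) = N + Dx x" using N swap_Dx[of x] unfolding Sym_def by simp
      moreover have "x \<in># N + Dx x"
      proof -
        have "count (N + Dx x) x > 0" using count_Dx[of x] by simp
        then show ?thesis by (simp only: count_greater_zero_iff)
      qed
      ultimately show "N + Dx x \<in> A" unfolding A_def Sym_def by simp
    next
      fix M assume "M \<in> A"
      then have M: "M \<in> Sym n m" "x \<in># M" unfolding A_def by auto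
      have sub: "Dx x \<subseteq># M" using Dx_sub[OF M] .
      have "set_mset (M - Dx x) \<subseteq> {..<m} \<times> {..<m}" using M unfolding Sym_def by (auto dest: in_diffD)
      moreover have "size (M - Dx x) = n - w" using M sub unfolding Sym_def w_def by (simp add: size_Diff_submset)
      moreover have "image_mset prod.swap (M - Dx x) = M - Dx x"
        using M sub swap_Dx[of x] unfolding Sym_def by (simp add: image_mset_Diff)
      ultimately have "M - Dx x \<in> Sym (n - w) m" unfolding Sym_def by simp
      moreover have "M = M - Dx x + Dx x" using sub by simp
      ultimately show "\<exists>N\<in>Sym (n - w) m. M = N + Dx x" by blast
    qed
  qed
  also have "\<dots> = (\<Sum>N\<in>Sym (n - w) m. count N x + 1)" using count_Dx[of x] by simp
  also have "\<dots> = Cx m x (n - w) + card (Sym (n - w) m)" unfolding Cx_def sum.distrib card_eq_sum ..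
  finally show ?thesis unfolding w_def .
qed

lemma size_sum_count:
  assumes "finite U" "set_mset M \<subseteq> U"
  shows "size M = (\<Sum>x\<in>U. count M x)"
  using assms(2)
proof (induction M)
  case empty then show ?case by simp
next
  case (add a M)
  have "(\<Sum>x\<in>U. count (add_mset a M) x) = (\<Sum>x\<in>U. count M x + (if x = a then 1 else 0))"
    by (rule sum.cong) auto
  also have "\<dots> = (\<Sum>x\<in>U. count M x) + 1" using add.prems assms(1) by (simp add: sum.distrib)
  finally show ?case using add by simp
qed

lemma sum_Cx: "(\<Sum>x\<in>{..<m} \<times> {..<m}. Cx m x n) = n * card (Sym n m)"
proof -
  have fin: "finite (Sym n m)" using card_Sym by blast
  have "(\<Sum>x\<in>{..<m} \<times> {..<m}. Cx m x n) = (\<Sum>M\<in>Sym n m. \<Sum>x\<in>{..<m} \<times> {..<m}. count M x)"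
    unfolding Cx_def by (rule sum.swap)
  also have "\<dots> = (\<Sum>M\<in>Sym n m. n)"
  proof (rule sum.cong)
    fix M assume "M \<in> Sym n m"
    then show "(\<Sum>x\<in>{..<m} \<times> {..<m}. count M x) = n"
      using size_sum_count[of "{..<m} \<times> {..<m}" M] unfolding Sym_def by simp
  qed simp
  finally show ?thesis by simp
qed

lemma T_rec:
  assumes "2 \<le> n"
  shows "n * card (Sym n m) = m * card (Sym (n - 1) m) + (m * m + n - 2) * card (Sym (n - 2) m)"
proof -
  define U where "U = {..<m} \<times> {..<m}"
  define T where "T k = card (Sym k m)" for k
  have pt: "Cx m x n = Cx m x (n - 2) + T (n - 2) + (if fst x = snd x then T (n - 1) else 0)" if x: "x \<in> U" for x
  proof (cases "fst x = snd x")
    case True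
    then have w: "size (Dx x) = 1" by (simp add: size_Dx)
    have "Cx m x n = Cx m x (n - 1) + T (n - 1)" using Cx_rec[of x m n] x w assms unfolding U_def T_def by simp
    also have "Cx m x (n - 1) = Cx m x (n - 2) + T (n - 2)"
      using Cx_rec[of x m "n - 1"] x w assms unfolding U_def T_def by (simp add: numeral_2_eq_2)
    finally show ?thesis using True by simp
  next
    case False
    then have w: "size (Dx x) = 2" by (simp add: size_Dx)
    show ?thesis using Cx_rec[of x m n] x w assms False unfolding U_def T_def by simp
  qed
  have finU: "finite U" unfolding U_def by simp
  have diag: "card {x\<in>U. fst x = snd x} = m"
  proof -
    have "{x\<in>U. fst x = snd x} = (\<lambda>i. (i, i)) ` {..<m}" unfolding U_def by auto
    moreover have "inj_on (\<lambda>i. (i, i)) {..<m}" by (simp add: inj_on_def)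
    ultimately show ?thesis by (simp add: card_image)
  qed
  have dg: "U \<inter> {x. fst x = snd x} = {x\<in>U. fst x = snd x}" by blast
  have "n * T n = (\<Sum>x\<in>U. Cx m x n)" using sum_Cx unfolding U_def T_def by simp
  also have "\<dots> = (\<Sum>x\<in>U. Cx m x (n - 2) + T (n - 2) + (if fst x = snd x then T (n - 1) else 0))"
    by (rule sum.cong) (simp_all add: pt)
  also have "\<dots> = (\<Sum>x\<in>U. Cx m x (n - 2)) + card U * T (n - 2) + card {x\<in>U. fst x = snd x} * T (n - 1)"
    using finU by (simp add: sum.distrib sum.If_cases dg)
  also have "(\<Sum>x\<in>U. Cx m x (n - 2)) = (n - 2) * T (n - 2)" using sum_Cx unfolding U_def T_def by simp
  also have "card U = m * m" unfolding U_def by (simp add: card_cartesian_product)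
  finally have "n * T n = (n - 2) * T (n - 2) + m * m * T (n - 2) + m * T (n - 1)" using diag by simp
  then show ?thesis unfolding T_def using assms by (simp add: algebra_simps)
qed




definition cb :: "int \<Rightarrow> nat \<Rightarrow> int" where
"cb a k = (if a < 0 then 0 else int (nat a choose k))"

lemma cb_pascal:
  assumes "1 \<le> k"
  shows "cb a k = cb (a - 1) k + cb (a - 1) (k - 1)"
proof (cases "a \<le> 0")
  case True
  then show ?thesis using assms unfolding cb_def by auto
next
  case False
  then have "nat a = Suc (nat (a - 1))" by simp
  moreover have "k = Suc (k - 1)" using assms by simp
  ultimately have "nat a choose k = (nat (a - 1) choose (k - 1)) + (nat (a - 1) choose k)"
    by (metis binomial_Suc_Suc)
  then show ?thesis using False unfolding cb_def by simp
qed

lemma nat_Q: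
  assumes "1 \<le> k"
  shows "k * (N choose k) = (N - (k - 1)) * (N choose (k - 1))"
proof -
  have "k * (N choose k) = N * ((N - 1) choose (k - 1))"
    using binomial_absorption[of "k - 1" N] assms by simp
  also have "\<dots> = (N - (k - 1)) * (N choose (k - 1))"
    using binomial_absorb_comp[of N "k - 1"] by simp
  finally show ?thesis .
qed

lemma cb_Q:
  assumes "1 \<le> k"
  shows "int k * cb (y + int k - 1) k = y * cb (y + int k - 1) (k - 1)"
proof (cases "y < 0")
  case True
  then show ?thesis unfolding cb_def by (auto simp: binomial_eq_0 nat_less_iff)
next
  case False
  define N where "N = nat (y + int k - 1)"
  have yN: "y = int N - int k + 1" "y + int k - 1 \<ge> 0" unfolding N_def using False assms by auto
  have kN: "k \<le> Suc N" using yN(1) False by linarith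
  have "int k * int (N choose k) = int (N - (k - 1)) * int (N choose (k - 1))"
    using nat_Q[OF assms, of N] by (metis of_nat_mult)
  moreover have "int (N - (k - 1)) = y" using yN assms kN by (simp add: of_nat_diff)
  ultimately show ?thesis unfolding cb_def N_def[symmetric] using yN(2) by simp
qed


lemma ID1:
  assumes "1 \<le> n"
  shows "(J + 1) * cb (y + int n) n + (int n - J - 1) * cb (y + int n - 1) n = (y + J + 1) * cb (y + int n - 1) (n - 1)"
proof -
  define u where "u = cb (y + int n - 1) n"
  define v where "v = cb (y + int n - 1) (n - 1)"
  have P: "cb (y + int n) n = u + v" unfolding u_def v_def using cb_pascal[OF assms, of "y + int n"] by simp
  have Q: "int n * u = y * v" unfolding u_def v_def using cb_Q[OF assms, of y] .
  show ?thesis unfolding P u_def[symmetric] v_def[symmetric] using Q by algebra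
qed

lemma ID2:
  assumes "2 \<le> n"
  shows "((J + 1)^2 + int n - 2) * cb (y + int n) n + (2 * (J + 1) * (int n - J - 2) - int n + 3) * cb (y + int n - 1) n
     + ((int n - J - 2)^2 + int n - 2) * cb (y + int n - 2) n = ((y + J + 1)^2 + int n - 2) * cb (y + int n - 2) (n - 2)"
proof -
  define Z where "Z = cb (y + int n - 2) n"
  define X where "X = cb (y + int n - 2) (n - 1)"
  define B where "B = cb (y + int n - 2) (n - 2)"
  have n1: "1 \<le> n" "1 \<le> n - 1" using assms by auto
  have P1: "cb (y + int n - 1) n = Z + X" unfolding Z_def X_def using cb_pascal[OF n1(1), of "y + int n - 1"] by simp
  have P2: "cb (y + int n - 1) (n - 1) = X + B" unfolding B_def X_def using cb_pascal[OF n1(2), of "y + int n - 1"]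
    using assms by (simp add: numeral_2_eq_2)
  have P3: "cb (y + int n) n = Z + 2 * X + B"
    using cb_pascal[OF n1(1), of "y + int n"] P1 P2 by simp
  have Q1: "int n * Z = (y - 1) * X" unfolding Z_def X_def using cb_Q[OF n1(1), of "y - 1"] by (simp add: algebra_simps)
  have Q2: "int (n - 1) * X = y * B" unfolding B_def X_def using cb_Q[OF n1(2), of y] assms
    by (simp add: algebra_simps numeral_2_eq_2)
  have nn: "int (n - 1) = int n - 1" using assms by simp
  have Q2': "(int n - 1) * X = y * B" using Q2 nn by simp
  have ne: "int n * (int n - 1) \<noteq> 0" using assms by simp
  define A0 where "A0 = (J + 1)^2 + int n - 2"
  define A1 where "A1 = 2 * (J + 1) * (int n - J - 2) - int n + 3"
  define A2 where "A2 = (int n - J - 2)^2 + int n - 2"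
  define R where "R = (y + J + 1)^2 + int n - 2"
  have "int n * (int n - 1) * (A0 * (Z + 2 * X + B) + A1 * (Z + X) + A2 * Z) = int n * (int n - 1) * (R * B)"
    unfolding A0_def A1_def A2_def R_def using Q1 Q2' by algebra
  then have "A0 * (Z + 2 * X + B) + A1 * (Z + X) + A2 * Z = R * B" using ne by simp
  then show ?thesis unfolding P3 P1 A0_def A1_def A2_def R_def Z_def B_def by simp
qed


lemma des_lt:
  assumes "1 \<le> n"
  shows "des n p < n"
proof -
  have "des n p \<le> card {1..n - 1}" unfolding des_def by (rule card_mono) auto
  then show ?thesis using assms by simp
qed

lemma Inv_neg: "k < 0 \<Longrightarrow> Inv n k = 0"
  unfolding Inv_def by simp

lemma Inv_big:
  assumes "1 \<le> n" "int n \<le> k"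
  shows "Inv n k = 0"
proof -
  have "False" if "int (des n p) = k" for p using des_lt[OF assms(1), of p] assms(2) that by linarith
  then have e: "{p \<in> involutions n. int (des n p) = k} = {}" by blast
  show ?thesis unfolding Inv_def e by simp
qed

lemma G_formula:
  assumes "1 \<le> n" "n \<le> N"
  shows "int (card (Sym n m)) = (\<Sum>j<N. Inv n (int j) * cb (int m + int n - 1 - int j) n)"
proof -
  define f where "f j = (m + n - 1 - j) choose n" for j
  have "card (Sym n m) = (\<Sum>p\<in>involutions n. f (des n p))" using card_Sym unfolding f_def by simp
  also have "\<dots> = (\<Sum>j<N. \<Sum>p\<in>{p \<in> involutions n. des n p = j}. f (des n p))"
    by (rule sum.group[symmetric]) (use finite_inv des_lt[OF assms(1)] assms(2) in \<open>auto intro: less_le_trans\<close>)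
  also have "\<dots> = (\<Sum>j<N. card {p \<in> involutions n. des n p = j} * f j)"
    by (rule sum.cong) simp_all
  finally have "int (card (Sym n m)) = (\<Sum>j<N. int (card {p \<in> involutions n. des n p = j}) * int (f j))"
    by simp
  also have "\<dots> = (\<Sum>j<N. Inv n (int j) * cb (int m + int n - 1 - int j) n)"
  proof (rule sum.cong)
    fix j assume "j \<in> {..<N}"
    show "int (card {p \<in> involutions n. des n p = j}) * int (f j) = Inv n (int j) * cb (int m + int n - 1 - int j) n"
    proof (cases "j < n")
      case True
      have "Inv n (int j) = int (card {p \<in> involutions n. des n p = j})" unfolding Inv_def by simp
      moreover have "cb (int m + int n - 1 - int j) n = int (f j)"
      proof -
        have eq: "int m + int n - 1 - int j = int (m + n - 1 - j)" using True by simp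
        show ?thesis unfolding eq cb_def f_def nat_int by simp
      qed
      ultimately show ?thesis by simp
    next
      case False
      have e: "{p \<in> involutions n. des n p = j} = {}" using des_lt[OF assms(1)] False by fastforce
      have "Inv n (int j) = 0" using Inv_big[OF assms(1)] False by simp
      then show ?thesis unfolding e by simp
    qed
  qed simp
  finally show ?thesis .
qed

lemma shiftsum:
  fixes h g :: "nat \<Rightarrow> int"
  assumes "d \<le> n" "\<And>k. k < d \<Longrightarrow> h k = 0" "\<And>j. n - d \<le> j \<Longrightarrow> j < n \<Longrightarrow> g j = 0"
    "\<And>j. h (j + d) = g j"
  shows "(\<Sum>k<n. h k) = (\<Sum>j<n. g j)"
proof -
  have "(\<Sum>k<n. h k) = (\<Sum>k\<in>{d..<n}. h k)"
    by (rule sum.mono_neutral_right) (use assms(2) in auto)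
  also have "\<dots> = (\<Sum>k\<in>{0 + d..<(n - d) + d}. h k)" using assms(1) by simp
  also have "\<dots> = (\<Sum>i\<in>{0..<n - d}. h (i + d))" by (rule sum.shift_bounds_nat_ivl)
  also have "\<dots> = (\<Sum>i\<in>{0..<n - d}. g i)" using assms(4) by simp
  also have "\<dots> = (\<Sum>j<n. g j)"
    by (rule sum.mono_neutral_left) (use assms(3) in auto)
  finally show ?thesis .
qed


lemma pw1:
  assumes "1 \<le> n"
  shows "(int j + 1) * cb (int m + int n - 1 - int j) n + (int n - int j - 1) * cb (int m + int n - 1 - int (Suc j)) n
    = int m * cb (int m + int (n - 1) - 1 - int j) (n - 1)"
proof -
  have i: "(int j + 1) * cb (int m - 1 - int j + int n) n + (int n - int j - 1) * cb (int m - 1 - int j + int n - 1) n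
     = (int m - 1 - int j + int j + 1) * cb (int m - 1 - int j + int n - 1) (n - 1)"
    using ID1[OF assms, of "int j" "int m - 1 - int j"] .
  have a1: "cb (int m - 1 - int j + int n) n = cb (int m + int n - 1 - int j) n" by (intro arg_cong[where f="\<lambda>a. cb a n"]) simp
  have a2: "cb (int m - 1 - int j + int n - 1) n = cb (int m + int n - 1 - int (Suc j)) n" by (intro arg_cong[where f="\<lambda>a. cb a n"]) simp
  have a3: "cb (int m - 1 - int j + int n - 1) (n - 1) = cb (int m + int (n - 1) - 1 - int j) (n - 1)" by (intro arg_cong[where f="\<lambda>a. cb a (n - 1)"]) (use assms in \<open>simp add: of_nat_diff\<close>)
  have a4: "int m - 1 - int j + int j + 1 = int m" by simp
  show ?thesis using i unfolding a1 a2 a3 a4 .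
qed

lemma pw2:
  assumes "2 \<le> n"
  shows "((int j + 1)^2 + int n - 2) * cb (int m + int n - 1 - int j) n
     + (2 * (int j + 1) * (int n - int j - 2) - int n + 3) * cb (int m + int n - 1 - int (Suc j)) n
     + ((int n - int j - 2)^2 + int n - 2) * cb (int m + int n - 1 - int (Suc (Suc j))) n
    = (int m ^ 2 + int n - 2) * cb (int m + int (n - 2) - 1 - int j) (n - 2)"
proof -
  have i: "((int j + 1)^2 + int n - 2) * cb (int m - 1 - int j + int n) n
     + (2 * (int j + 1) * (int n - int j - 2) - int n + 3) * cb (int m - 1 - int j + int n - 1) n
     + ((int n - int j - 2)^2 + int n - 2) * cb (int m - 1 - int j + int n - 2) n
     = ((int m - 1 - int j + int j + 1)^2 + int n - 2) * cb (int m - 1 - int j + int n - 2) (n - 2)"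
    using ID2[OF assms, of "int j" "int m - 1 - int j"] .
  have a1: "cb (int m - 1 - int j + int n) n = cb (int m + int n - 1 - int j) n" by (intro arg_cong[where f="\<lambda>a. cb a n"]) simp
  have a2: "cb (int m - 1 - int j + int n - 1) n = cb (int m + int n - 1 - int (Suc j)) n" by (intro arg_cong[where f="\<lambda>a. cb a n"]) simp
  have a3: "cb (int m - 1 - int j + int n - 2) n = cb (int m + int n - 1 - int (Suc (Suc j))) n" by (intro arg_cong[where f="\<lambda>a. cb a n"]) simp
  have a5: "cb (int m - 1 - int j + int n - 2) (n - 2) = cb (int m + int (n - 2) - 1 - int j) (n - 2)" by (intro arg_cong[where f="\<lambda>a. cb a (n - 2)"]) (use assms in \<open>simp add: of_nat_diff\<close>)
  have a4: "int m - 1 - int j + int j + 1 = int m" by simp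
  show ?thesis using i unfolding a1 a2 a3 a4 a5 .
qed


definition E :: "nat \<Rightarrow> int \<Rightarrow> int" where
"E n k = int n * Inv n k -
          ((k + 1) * Inv (n - 1) k
         + (int n - k) * Inv (n - 1) (k - 1)
         + ((k + 1)^2 + int n - 2) * Inv (n - 2) k
         + (2 * k * (int n - k - 1) - int n + 3) * Inv (n - 2) (k - 1)
         + ((int n - k)^2 + int n - 2) * Inv (n - 2) (k - 2))"

lemma main_sum:
  assumes n3: "3 \<le> n"
  shows "(\<Sum>k<n. E n (int k) * cb (int m + int n - 1 - int k) n) = 0"
proof -
  define c where "c k = cb (int m + int n - 1 - int k) n" for k
  define Ia where "Ia k = Inv (n - 1) k" for k
  define Ib where "Ib k = Inv (n - 2) k" for k
  have Ia0: "Ia (int j) = 0" if "n - 1 \<le> j" for j unfolding Ia_def using Inv_big[of "n - 1" "int j"] n3 that by simp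
  have Ib0: "Ib (int j) = 0" if "n - 2 \<le> j" for j unfolding Ib_def using Inv_big[of "n - 2" "int j"] n3 that by simp
  have Ian: "Ia k = 0" if "k < 0" for k unfolding Ia_def using Inv_neg that by simp
  have Ibn: "Ib k = 0" if "k < 0" for k unfolding Ib_def using Inv_neg that by simp
  define T1 where "T1 = (\<Sum>k<n. (int k + 1) * Ia (int k) * c k)"
  define T2 where "T2 = (\<Sum>k<n. (int n - int k) * Ia (int k - 1) * c k)"
  define T3 where "T3 = (\<Sum>k<n. ((int k + 1)^2 + int n - 2) * Ib (int k) * c k)"
  define T4 where "T4 = (\<Sum>k<n. (2 * int k * (int n - int k - 1) - int n + 3) * Ib (int k - 1) * c k)"
  define T5 where "T5 = (\<Sum>k<n. ((int n - int k)^2 + int n - 2) * Ib (int k - 2) * c k)"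
  define G0 where "G0 = (\<Sum>k<n. Inv n (int k) * c k)"
  have split: "(\<Sum>k<n. E n (int k) * c k) = int n * G0 - (T1 + T2 + T3 + T4 + T5)"
    unfolding E_def T1_def T2_def T3_def T4_def T5_def G0_def Ia_def Ib_def
    by (simp add: left_diff_distrib distrib_right sum_subtractf sum.distrib sum_distrib_left mult.assoc)
  define T2' where "T2' = (\<Sum>j<n. (int n - int j - 1) * Ia (int j) * c (Suc j))"
  have T2eq: "T2 = T2'" unfolding T2_def T2'_def
    by (rule shiftsum[where d=1]) (use n3 Ia0 Ian in \<open>auto simp: algebra_simps\<close>)
  define T4' where "T4' = (\<Sum>j<n. (2 * (int j + 1) * (int n - int j - 2) - int n + 3) * Ib (int j) * c (Suc j))"
  have T4eq: "T4 = T4'" unfolding T4_def T4'_def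
    by (rule shiftsum[where d=1]) (use n3 Ib0 Ibn in \<open>auto simp: algebra_simps\<close>)
  define T5' where "T5' = (\<Sum>j<n. ((int n - int j - 2)^2 + int n - 2) * Ib (int j) * c (Suc (Suc j)))"
  have T5eq: "T5 = T5'" unfolding T5_def T5'_def
    by (rule shiftsum[where d=2]) (use n3 Ib0 Ibn in \<open>auto simp: algebra_simps numeral_2_eq_2\<close>)
  define G1 where "G1 = (\<Sum>j<n. Inv (n - 1) (int j) * cb (int m + int (n - 1) - 1 - int j) (n - 1))"
  define G2 where "G2 = (\<Sum>j<n. Inv (n - 2) (int j) * cb (int m + int (n - 2) - 1 - int j) (n - 2))"
  have S1: "T1 + T2' = int m * G1"
  proof -
    have "T1 + T2' = (\<Sum>j<n. Ia (int j) * ((int j + 1) * c j + (int n - int j - 1) * c (Suc j)))"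
      unfolding T1_def T2'_def sum.distrib[symmetric] by (rule sum.cong) (simp_all add: algebra_simps)
    also have "\<dots> = (\<Sum>j<n. int m * (Inv (n - 1) (int j) * cb (int m + int (n - 1) - 1 - int j) (n - 1)))"
      by (rule sum.cong) (use pw1[of n] n3 in \<open>simp_all add: c_def Ia_def\<close>)
    finally show ?thesis unfolding G1_def sum_distrib_left .
  qed
  have S2: "T3 + T4' + T5' = (int m ^ 2 + int n - 2) * G2"
  proof -
    have "T3 + T4' + T5' = (\<Sum>j<n. Ib (int j) * (((int j + 1)^2 + int n - 2) * c j
       + (2 * (int j + 1) * (int n - int j - 2) - int n + 3) * c (Suc j)
       + ((int n - int j - 2)^2 + int n - 2) * c (Suc (Suc j))))"
      unfolding T3_def T4'_def T5'_def sum.distrib[symmetric] by (rule sum.cong) (simp_all add: algebra_simps)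
    also have "\<dots> = (\<Sum>j<n. (int m ^ 2 + int n - 2) * (Inv (n - 2) (int j) * cb (int m + int (n - 2) - 1 - int j) (n - 2)))"
      by (rule sum.cong) (use pw2[of n] n3 in \<open>simp_all add: c_def Ib_def\<close>)
    finally show ?thesis unfolding G2_def sum_distrib_left .
  qed
  have g0: "int (card (Sym n m)) = G0" unfolding G0_def c_def using G_formula[of n n m] n3 by simp
  have g1: "int (card (Sym (n - 1) m)) = G1" unfolding G1_def using G_formula[of "n - 1" n m] n3 by simp
  have g2: "int (card (Sym (n - 2) m)) = G2" unfolding G2_def using G_formula[of "n - 2" n m] n3 by simp
  have rec: "n * card (Sym n m) = m * card (Sym (n - 1) m) + (m * m + n - 2) * card (Sym (n - 2) m)"
    using T_rec[of n m] n3 by simp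
  then have "int n * int (card (Sym n m)) = int m * int (card (Sym (n - 1) m)) + (int m ^ 2 + int n - 2) * int (card (Sym (n - 2) m))"
  proof -
    have e: "int (m * m + n - 2) = int m ^ 2 + int n - 2" using n3 by (simp add: of_nat_diff power2_eq_square)
    have "int (n * card (Sym n m)) = int (m * card (Sym (n - 1) m) + (m * m + n - 2) * card (Sym (n - 2) m))"
      using rec by simp
    then show ?thesis unfolding of_nat_add of_nat_mult e .
  qed
  then have "int n * G0 = int m * G1 + (int m ^ 2 + int n - 2) * G2" using g0 g1 g2 by simp
  then show ?thesis using split T2eq T4eq T5eq S1 S2 unfolding c_def by simp
qed


lemma E_zero_big:
  assumes n3: "3 \<le> n" and k: "int n \<le> k"
  shows "E n k = 0"
proof -
  have "Inv n k = 0" using Inv_big[of n k] n3 k by simp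
  moreover have "Inv (n - 1) k = 0" "Inv (n - 1) (k - 1) = 0" using Inv_big[of "n - 1"] n3 k by auto
  moreover have "Inv (n - 2) k = 0" "Inv (n - 2) (k - 1) = 0" "Inv (n - 2) (k - 2) = 0"
    using Inv_big[of "n - 2"] n3 k by auto
  ultimately show ?thesis unfolding E_def by simp
qed

lemma E_zero:
  assumes n3: "3 \<le> n"
  shows "k < n \<Longrightarrow> E n (int k) = 0"
proof (induction k rule: less_induct)
  case (less k)
  have ms: "(\<Sum>k'<n. E n (int k') * cb (int (Suc k) + int n - 1 - int k') n) = 0"
    using main_sum[OF n3, of "Suc k"] .
  have "(\<Sum>k'<n. E n (int k') * cb (int (Suc k) + int n - 1 - int k') n) = (\<Sum>k'<n. if k' = k then E n (int k) else 0)"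
  proof (rule sum.cong)
    fix k' assume k': "k' \<in> {..<n}"
    show "E n (int k') * cb (int (Suc k) + int n - 1 - int k') n = (if k' = k then E n (int k) else 0)"
    proof (cases k' k rule: linorder_cases)
      case less
      then show ?thesis using less.IH[of k'] \<open>k < n\<close> by simp
    next
      case equal
      then show ?thesis unfolding cb_def by simp
    next
      case greater
      have "int (Suc k) + int n - 1 - int k' = int (n + k - k')" using greater k' by auto
      moreover have "n + k - k' < n" using greater k' by auto
      ultimately have "cb (int (Suc k) + int n - 1 - int k') n = 0" unfolding cb_def by simp
      then show ?thesis using greater by simp
    qed
  qed simp
  also have "\<dots> = E n (int k)" using less.prems by simp
  finally show ?case using ms by simp
qed

theorem theorem2p2:
  fixes n :: nat and k :: int
  assumes "n \<ge> 3" and "k \<ge> 0"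
  shows "int n * Inv n k =
           (k + 1) * Inv (n - 1) k
         + (int n - k) * Inv (n - 1) (k - 1)
         + ((k + 1)^2 + int n - 2) * Inv (n - 2) k
         + (2 * k * (int n - k - 1) - int n + 3) * Inv (n - 2) (k - 1)
         + ((int n - k)^2 + int n - 2) * Inv (n - 2) (k - 2)"
proof -
  have "E n k = 0"
  proof (cases "k < int n")
    case True
    then have "nat k < n" "int (nat k) = k" using assms by auto
    then show ?thesis using E_zero[OF assms(1), of "nat k"] by simp
  next
    case False
    then show ?thesis using E_zero_big[OF assms(1)] by simp
  qed
  then show ?thesis unfolding E_def by simp
qed


end
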